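(* Consider an extended Runge--Kutta method with parameters $a_{ij}$ ($1\le i\le s$, $1\le j\le m$), $b_i$ ($1\le i\le m$), and full-rank $(m-s)\times m$ matrix $d=(d_{ij})$. Set $a_{ij}=0$ for $i>s$, and let $M$ be the $m\times m$ matrix $M_{ij}=b_ib_j-b_ia_{ij}-b_ja_{ji}$ ($i,j=1,\dots,m$). Let $V$ be an $m\times s$ matrix whose columns form a basis of the nullspace of $d$. If $b_i=0$ for $i=s+1,\dots,m$ and $V^\top MV=0$, then the extended Runge--Kutta method is quadratic-preserving and symplectic.
   Context: For an ODE $\dot z=f(z)$ on $\mathbb{R}^n$, the extended Runge--Kutta method maps $z_0$ to $z_1$ defined by the equations, with unknowns $k_1,\dots,k_m\in\mathbb{R}^n$: $Z_i=z_0+h\sum_{j=1}^m a_{ij}k_j$ ($i=1,\dots,s$), $k_i=f(Z_i)$ ($i=1,\dots,s$), $0=\sum_{j=1}^m d_{ij}k_j$ ($i=1,\dots,m-s$), $z_1=z_0+h\sum_{i=1}^m b_ik_i$. Quadratic-preserving means: whenever $Q(z)=z^\top Cz$ ($C$ symmetric) is a first integral of $f$, every step satisfies $z_1^\top Cz_1=z_0^\top Cz_0$. Symplectic means: applied to any Hamiltonian vector field on $\mathbb{R}^{2n}$ with the canonical symplectic form, the step map $z_0\mapsto z_1$ is symplectic. *)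

theory Defs
  imports "HOL-Analysis.Analysis"
begin

text \<open>Indices are 0-based: stages are indexed by 0..<m, the first
  s of them (0..<s) are the "genuine" stages with k_i = f(Z_i); the rows of d are
  indexed by 0..<m-s.  Coefficients are given as functions on nat, only the values
  inside these index ranges matter.\<close>

definition erk_step ::
  "nat \<Rightarrow> nat \<Rightarrow> (nat \<Rightarrow> nat \<Rightarrow> real) \<Rightarrow> (nat \<Rightarrow> real) \<Rightarrow> (nat \<Rightarrow> nat \<Rightarrow> real)
   \<Rightarrow> ('v::real_vector \<Rightarrow> 'v) \<Rightarrow> real \<Rightarrow> 'v \<Rightarrow> (nat \<Rightarrow> 'v) \<Rightarrow> 'v \<Rightarrow> bool" where
  "erk_step m s a b d f h z0 k z1 \<longleftrightarrow>
     (\<forall>i<s. k i = f (z0 + h *\<^sub>R (\<Sum>j<m. a i j *\<^sub>R k j))) \<and>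
     (\<forall>i<m - s. (\<Sum>j<m. d i j *\<^sub>R k j) = 0) \<and>
     z1 = z0 + h *\<^sub>R (\<Sum>i<m. b i *\<^sub>R k i)"

definition first_integral :: "('v::real_normed_vector \<Rightarrow> 'v) \<Rightarrow> ('v \<Rightarrow> real) \<Rightarrow> bool" where
  "first_integral f Q \<longleftrightarrow> (\<forall>z. \<exists>Q'. (Q has_derivative Q') (at z) \<and> Q' (f z) = 0)"

definition quad_form :: "real^'n^'n \<Rightarrow> real^'n \<Rightarrow> real" where
  "quad_form C z = z \<bullet> (C *v z)"

definition quadratic_preserving ::
  "'n::finite itself \<Rightarrow> nat \<Rightarrow> nat \<Rightarrow> (nat \<Rightarrow> nat \<Rightarrow> real) \<Rightarrow> (nat \<Rightarrow> real) \<Rightarrow> (nat \<Rightarrow> nat \<Rightarrow> real) \<Rightarrow> bool" where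
  "quadratic_preserving (_::'n itself) m s a b d \<longleftrightarrow>
     (\<forall>(f::real^'n \<Rightarrow> real^'n) (C::real^'n^'n) h z0 k z1.
        transpose C = C \<longrightarrow> first_integral f (quad_form C) \<longrightarrow>
        erk_step m s a b d f h z0 k z1 \<longrightarrow> quad_form C z1 = quad_form C z0)"

text \<open>Phase space R^{2n} = real^('n + 'n): coordinates q_i = z$Inl i, p_i = z$Inr i.
  Canonical symplectic form omega(u,v) = u^T J v with J = [[0, I], [-I, 0]].\<close>
definition canon_J :: "real^('n::finite + 'n) \<Rightarrow> real^('n + 'n)" where
  "canon_J g = (\<chi> k. case k of Inl i \<Rightarrow> g $ Inr i | Inr i \<Rightarrow> - (g $ Inl i))"

definition symp_form :: "real^('n::finite + 'n) \<Rightarrow> real^('n + 'n) \<Rightarrow> real" where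
  "symp_form u v = u \<bullet> canon_J v"

text \<open>f is the Hamiltonian vector field of a (twice differentiable) Hamiltonian H:
  f = J^{-1} grad H, i.e. dq/dt = dH/dp, dp/dt = - dH/dq.\<close>
definition hamiltonian_field ::
  "(real^('n::finite + 'n) \<Rightarrow> real) \<Rightarrow> (real^('n + 'n) \<Rightarrow> real^('n + 'n)) \<Rightarrow> bool" where
  "hamiltonian_field H f \<longleftrightarrow>
     (\<exists>gH. (\<forall>z. (H has_derivative (\<lambda>v. gH z \<bullet> v)) (at z)) \<and>
           (\<forall>z. gH differentiable (at z)) \<and>
           (\<forall>z. f z = (\<chi> k. case k of Inl i \<Rightarrow> gH z $ Inr i | Inr i \<Rightarrow> - (gH z $ Inl i))))"

definition symplectic_on ::
  "(real^('n::finite + 'n)) set \<Rightarrow> (real^('n + 'n) \<Rightarrow> real^('n + 'n)) \<Rightarrow> bool" where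
  "symplectic_on U \<Phi> \<longleftrightarrow>
     (\<forall>z\<in>U. \<exists>\<Phi>'. (\<Phi> has_derivative \<Phi>') (at z) \<and>
               (\<forall>u v. symp_form (\<Phi>' u) (\<Phi>' v) = symp_form u v))"

text \<open>The method is symplectic: for every Hamiltonian vector field and step size h,
  whenever the stage values depend differentiably on z0 on an open set U
  (i.e. the step map z0 \<mapsto> z1 is a well-defined differentiable branch on U),
  the step map is symplectic on U.\<close>
definition symplectic_method ::
  "'n::finite itself \<Rightarrow> nat \<Rightarrow> nat \<Rightarrow> (nat \<Rightarrow> nat \<Rightarrow> real) \<Rightarrow> (nat \<Rightarrow> real) \<Rightarrow> (nat \<Rightarrow> nat \<Rightarrow> real) \<Rightarrow> bool" where
  "symplectic_method (_::'n itself) m s a b d \<longleftrightarrow>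
     (\<forall>(H::real^('n + 'n) \<Rightarrow> real) f h U (K::nat \<Rightarrow> real^('n + 'n) \<Rightarrow> real^('n + 'n)).
        hamiltonian_field H f \<longrightarrow> open U \<longrightarrow>
        (\<forall>i<m. \<forall>z\<in>U. K i differentiable (at z)) \<longrightarrow>
        (\<forall>z\<in>U. erk_step m s a b d f h z (\<lambda>i. K i z) (z + h *\<^sub>R (\<Sum>i<m. b i *\<^sub>R K i z))) \<longrightarrow>
        symplectic_on U (\<lambda>z. z + h *\<^sub>R (\<Sum>i<m. b i *\<^sub>R K i z)))"

definition full_row_rank :: "nat \<Rightarrow> nat \<Rightarrow> (nat \<Rightarrow> nat \<Rightarrow> real) \<Rightarrow> bool" where
  "full_row_rank r c d \<longleftrightarrow>
     (\<forall>y::nat \<Rightarrow> real. (\<forall>j<c. (\<Sum>i<r. y i * d i j) = 0) \<longrightarrow> (\<forall>i<r. y i = 0))"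

definition nullspace_basis :: "nat \<Rightarrow> nat \<Rightarrow> nat \<Rightarrow> (nat \<Rightarrow> nat \<Rightarrow> real) \<Rightarrow> (nat \<Rightarrow> nat \<Rightarrow> real) \<Rightarrow> bool" where
  "nullspace_basis r c t d V \<longleftrightarrow>
     (\<forall>x::nat \<Rightarrow> real. (\<forall>i<r. (\<Sum>j<c. d i j * x j) = 0) \<longleftrightarrow>
                       (\<exists>y::nat \<Rightarrow> real. \<forall>j<c. x j = (\<Sum>l<t. V j l * y l))) \<and>
     (\<forall>y::nat \<Rightarrow> real. (\<forall>j<c. (\<Sum>l<t. V j l * y l) = 0) \<longrightarrow> (\<forall>l<t. y l = 0))"

definition a_ext :: "nat \<Rightarrow> (nat \<Rightarrow> nat \<Rightarrow> real) \<Rightarrow> nat \<Rightarrow> nat \<Rightarrow> real" where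
  "a_ext s a i j = (if i < s then a i j else 0)"

definition M_mat :: "nat \<Rightarrow> (nat \<Rightarrow> nat \<Rightarrow> real) \<Rightarrow> (nat \<Rightarrow> real) \<Rightarrow> nat \<Rightarrow> nat \<Rightarrow> real" where
  "M_mat s a b i j = b i * b j - b i * a_ext s a i j - b j * a_ext s a j i"

end

theory Submission
  imports Defs
begin

lemma bil_suml: "bilinear B \<Longrightarrow> B (\<Sum>i\<in>S. f i) y = (\<Sum>i\<in>S. B (f i) y)"
  by (induction S rule: infinite_finite_induct) (auto simp: bilinear_ladd bilinear_lzero)
lemma bil_sumr: "bilinear B \<Longrightarrow> B y (\<Sum>i\<in>S. f i) = (\<Sum>i\<in>S. B y (f i))"
  by (induction S rule: infinite_finite_induct) (auto simp: bilinear_radd bilinear_rzero)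

lemma sum4_swap:
  "(\<Sum>i\<in>A. \<Sum>j\<in>B. \<Sum>p\<in>C. \<Sum>q\<in>D. F i j p q) = (\<Sum>p\<in>C. \<Sum>q\<in>D. \<Sum>i\<in>A. \<Sum>j\<in>B. F i j p q)"
proof -
  have "(\<Sum>i\<in>A. \<Sum>j\<in>B. \<Sum>p\<in>C. \<Sum>q\<in>D. F i j p q) = (\<Sum>i\<in>A. \<Sum>p\<in>C. \<Sum>j\<in>B. \<Sum>q\<in>D. F i j p q)"
    by (rule sum.cong[OF refl], rule sum.swap)
  also have "\<dots> = (\<Sum>i\<in>A. \<Sum>p\<in>C. \<Sum>q\<in>D. \<Sum>j\<in>B. F i j p q)"
    by (rule sum.cong[OF refl], rule sum.cong[OF refl], rule sum.swap)
  also have "\<dots> = (\<Sum>p\<in>C. \<Sum>i\<in>A. \<Sum>q\<in>D. \<Sum>j\<in>B. F i j p q)"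
    by (rule sum.swap)
  also have "\<dots> = (\<Sum>p\<in>C. \<Sum>q\<in>D. \<Sum>i\<in>A. \<Sum>j\<in>B. F i j p q)"
    by (rule sum.cong[OF refl], rule sum.swap)
  finally show ?thesis .
qed

lemma core:
  fixes B :: "'v::real_vector \<Rightarrow> 'v \<Rightarrow> real"
  assumes bil: "bilinear B"
  and b0: "\<forall>i. s \<le> i \<and> i < m \<longrightarrow> b i = 0"
  and MV: "\<forall>p<s. \<forall>q<s. (\<Sum>i<m. \<Sum>j<m. V i p * M_mat s a b i j * V j q) = 0"
  and kV: "\<forall>j<m. k j = (\<Sum>p<s. V j p *\<^sub>R \<kappa> p)"
  and lV: "\<forall>j<m. l j = (\<Sum>q<s. V j q *\<^sub>R \<mu> q)"
  and st: "\<forall>i<s. B (k i) (v + h *\<^sub>R (\<Sum>j<m. a i j *\<^sub>R l j)) + B (u + h *\<^sub>R (\<Sum>j<m. a i j *\<^sub>R k j)) (l i) = 0"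
  shows "B (u + h *\<^sub>R (\<Sum>i<m. b i *\<^sub>R k i)) (v + h *\<^sub>R (\<Sum>i<m. b i *\<^sub>R l i)) = B u v"
proof -
  define \<beta> where "\<beta> i j = B (k i) (l j)" for i j
  note bs = bilinear_ladd[OF bil] bilinear_radd[OF bil] bilinear_lmul[OF bil] bilinear_rmul[OF bil]
     bil_suml[OF bil] bil_sumr[OF bil]
  have e1: "B (u + h *\<^sub>R (\<Sum>i<m. b i *\<^sub>R k i)) (v + h *\<^sub>R (\<Sum>i<m. b i *\<^sub>R l i)) =
     B u v + h * ((\<Sum>i<m. b i * B (k i) v) + (\<Sum>i<m. b i * B u (l i))) + h^2 * (\<Sum>i<m. \<Sum>j<m. b i * b j * \<beta> i j)"
  proof -
    have g: "B (u + h *\<^sub>R X) (v + h *\<^sub>R Y) = B u v + h * (B X v + B u Y) + h^2 * B X Y" for X Y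
      by (simp add: bs algebra_simps power2_eq_square)
    have "B (\<Sum>i<m. b i *\<^sub>R k i) (\<Sum>i<m. b i *\<^sub>R l i) = (\<Sum>i<m. \<Sum>j<m. b i * b j * \<beta> i j)"
      by (simp add: bs \<beta>_def sum_distrib_left algebra_simps) (subst sum.swap, simp add: algebra_simps)
    moreover have "B (\<Sum>i<m. b i *\<^sub>R k i) v = (\<Sum>i<m. b i * B (k i) v)"
      "B u (\<Sum>i<m. b i *\<^sub>R l i) = (\<Sum>i<m. b i * B u (l i))" by (simp_all add: bs)
    ultimately show ?thesis unfolding g by simp
  qed
  have e2: "b i * (B (k i) v + B u (l i)) = - h * (\<Sum>j<m. b i * a_ext s a i j * (\<beta> i j + \<beta> j i))"
    if "i < m" for i
  proof (cases "i < s")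
    case True
    have "B (k i) v + B u (l i) + h * (\<Sum>j<m. a i j * (\<beta> i j + \<beta> j i)) = 0"
      using st True by (simp add: bs \<beta>_def sum_distrib_left algebra_simps sum.distrib)
    then have q: "B (k i) v + B u (l i) = - h * (\<Sum>j<m. a i j * (\<beta> i j + \<beta> j i))" by linarith
    have "(\<Sum>j<m. b i * a_ext s a i j * (\<beta> i j + \<beta> j i)) = b i * (\<Sum>j<m. a i j * (\<beta> i j + \<beta> j i))"
      using True by (simp add: a_ext_def sum_distrib_left algebra_simps)
    then show ?thesis unfolding q by simp
  next
    case False then show ?thesis using b0 that by simp
  qed
  have e3: "(\<Sum>i<m. b i * B (k i) v) + (\<Sum>i<m. b i * B u (l i)) =
      - h * (\<Sum>i<m. \<Sum>j<m. b i * a_ext s a i j * (\<beta> i j + \<beta> j i))"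
    using e2 by (simp add: sum.distrib[symmetric] distrib_left[symmetric] sum_distrib_left)
  have sw: "(\<Sum>i<m. \<Sum>j<m. b j * a_ext s a j i * \<beta> i j) = (\<Sum>i<m. \<Sum>j<m. b i * a_ext s a i j * \<beta> j i)"
    by (rule sum.swap)
  have e4: "(\<Sum>i<m. \<Sum>j<m. M_mat s a b i j * \<beta> i j) =
      (\<Sum>i<m. \<Sum>j<m. b i * b j * \<beta> i j) - (\<Sum>i<m. \<Sum>j<m. b i * a_ext s a i j * (\<beta> i j + \<beta> j i))"
  proof -
    have "(\<Sum>i<m. \<Sum>j<m. M_mat s a b i j * \<beta> i j) =
      (\<Sum>i<m. \<Sum>j<m. b i * b j * \<beta> i j) - (\<Sum>i<m. \<Sum>j<m. b i * a_ext s a i j * \<beta> i j)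
       - (\<Sum>i<m. \<Sum>j<m. b j * a_ext s a j i * \<beta> i j)"
      by (simp add: M_mat_def algebra_simps sum_subtractf sum.distrib)
    then show ?thesis using sw by (simp add: algebra_simps sum.distrib)
  qed
  have e5: "(\<Sum>i<m. \<Sum>j<m. M_mat s a b i j * \<beta> i j) = 0"
  proof -
    have "\<beta> i j = (\<Sum>p<s. \<Sum>q<s. V i p * V j q * B (\<kappa> p) (\<mu> q))" if "i<m" "j<m" for i j
      using that kV lV by (simp add: \<beta>_def bs sum_distrib_left algebra_simps) (subst sum.swap, simp)
    then have "(\<Sum>i<m. \<Sum>j<m. M_mat s a b i j * \<beta> i j) =
       (\<Sum>i<m. \<Sum>j<m. \<Sum>p<s. \<Sum>q<s. V i p * M_mat s a b i j * V j q * B (\<kappa> p) (\<mu> q))"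
      by (simp add: sum_distrib_left algebra_simps)
    also have "\<dots> = (\<Sum>p<s. \<Sum>q<s. \<Sum>i<m. \<Sum>j<m. V i p * M_mat s a b i j * V j q * B (\<kappa> p) (\<mu> q))"
      by (rule sum4_swap)
    also have "\<dots> = (\<Sum>p<s. \<Sum>q<s. (\<Sum>i<m. \<Sum>j<m. V i p * M_mat s a b i j * V j q) * B (\<kappa> p) (\<mu> q))"
      by (simp add: sum_distrib_right)
    also have "\<dots> = 0" using MV by simp
    finally show ?thesis .
  qed
  have z: "(\<Sum>i<m. \<Sum>j<m. b i * b j * \<beta> i j) = (\<Sum>i<m. \<Sum>j<m. b i * a_ext s a i j * (\<beta> i j + \<beta> j i))"
    using e4 e5 by linarith
  show ?thesis unfolding e1 e3 z by (simp add: power2_eq_square)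
qed

lemma V_decomp:
  fixes x :: "nat \<Rightarrow> real^'n"
  assumes nb: "nullspace_basis r c t d V" and dx: "\<forall>i<r. (\<Sum>j<c. d i j *\<^sub>R x j) = 0"
  shows "\<exists>\<kappa>. \<forall>j<c. x j = (\<Sum>l<t. V j l *\<^sub>R \<kappa> l)"
proof -
  have "\<forall>cc. \<exists>y. \<forall>j<c. x j $ cc = (\<Sum>l<t. V j l * y l)"
  proof
    fix cc
    have "\<forall>i<r. (\<Sum>j<c. d i j * x j $ cc) = 0"
    proof (intro allI impI)
      fix i assume "i < r"
      then have "(\<Sum>j<c. d i j *\<^sub>R x j) $ cc = 0" using dx by simp
      then show "(\<Sum>j<c. d i j * x j $ cc) = 0" by simp
    qed
    moreover have "(\<forall>i<r. (\<Sum>j<c. d i j * (\<lambda>j. x j $ cc) j) = 0) = (\<exists>y. \<forall>j<c. (\<lambda>j. x j $ cc) j = (\<Sum>l<t. V j l * y l))"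
      by (rule nb[unfolded nullspace_basis_def, THEN conjunct1, THEN spec])
    ultimately show "\<exists>y. \<forall>j<c. x j $ cc = (\<Sum>l<t. V j l * y l)" by simp
  qed
  then obtain Y where Y: "\<forall>cc. \<forall>j<c. x j $ cc = (\<Sum>l<t. V j l * Y cc l)" by metis
  show ?thesis
    by (rule exI[of _ "\<lambda>l. \<chi> cc. Y cc l"]) (use Y in \<open>simp add: vec_eq_iff\<close>)
qed

lemma quad_part:
  assumes nb: "nullspace_basis (m - s) m s d V"
    and b0: "\<forall>i. s \<le> i \<and> i < m \<longrightarrow> b i = 0"
    and MV: "\<forall>p<s. \<forall>q<s. (\<Sum>i<m. \<Sum>j<m. V i p * M_mat s a b i j * V j q) = 0"
  shows "quadratic_preserving TYPE('n::finite) m s a b d"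
  unfolding quadratic_preserving_def
proof (intro allI impI)
  fix f :: "real^'n \<Rightarrow> real^'n" and C :: "real^'n^'n" and h z0 k z1
  assume fi: "first_integral f (quad_form C)" and st: "erk_step m s a b d f h z0 k z1"
  define B where "B x y = x \<bullet> (C *v y)" for x y :: "real^'n"
  have bil: "bilinear B"
    unfolding bilinear_def B_def linear_iff by (simp add: algebra_simps inner_add_left inner_add_right)
  have qd: "(quad_form C has_derivative (\<lambda>v. B v z + B z v)) (at z)" for z
  proof -
    have "((\<lambda>z. z \<bullet> (C *v z)) has_derivative (\<lambda>v. z \<bullet> (C *v v) + v \<bullet> (C *v z))) (at z)"
      by (auto intro!: derivative_eq_intros bounded_linear.has_derivative[OF matrix_vector_mul_bounded_linear])
    then show ?thesis unfolding quad_form_def[abs_def] B_def by (simp add: add.commute)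
  qed
  have z0: "B v z + B z v = 0" if "v = f z" for v z
  proof -
    obtain Q' where "(quad_form C has_derivative Q') (at z)" "Q' (f z) = 0"
      using fi unfolding first_integral_def by blast
    with has_derivative_unique[OF qd[of z]] show ?thesis using that by metis
  qed
  from st have kf: "\<forall>i<s. k i = f (z0 + h *\<^sub>R (\<Sum>j<m. a i j *\<^sub>R k j))"
    and kd: "\<forall>i<m - s. (\<Sum>j<m. d i j *\<^sub>R k j) = 0"
    and z1: "z1 = z0 + h *\<^sub>R (\<Sum>i<m. b i *\<^sub>R k i)"
    unfolding erk_step_def by auto
  obtain \<kappa> where kV: "\<forall>j<m. k j = (\<Sum>l<s. V j l *\<^sub>R \<kappa> l)"
    using V_decomp[OF nb kd] by blast
  have "B z1 z1 = B z0 z0"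
    unfolding z1
    by (rule core[OF bil b0 MV kV kV]) (use kf z0 in auto)
  then show "quad_form C z1 = quad_form C z0" unfolding B_def quad_form_def .
qed


lemma hess_est:
  fixes H :: "'a::real_inner \<Rightarrow> real"
  assumes dH: "\<forall>z. (H has_derivative (\<lambda>v. gH z \<bullet> v)) (at z)"
  and lin: "linear G"
  and ap: "\<forall>w. norm w < \<delta> \<longrightarrow> norm (gH (p+w) - gH p - G w) \<le> \<epsilon> * norm w"
  and ep: "\<epsilon> > 0"
  and t: "t > 0" "t * (norm x + norm y) < \<delta>"
  shows "\<bar>H (p + t *\<^sub>R x + t *\<^sub>R y) - H (p + t *\<^sub>R x) - H (p + t *\<^sub>R y) + H p - t^2 * (G x \<bullet> y)\<bar>
          \<le> \<epsilon> * t^2 * (norm y * (norm x + 2 * norm y))"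
proof -
  define \<phi> where "\<phi> \<sigma> = H (p + t *\<^sub>R x + \<sigma> *\<^sub>R (t *\<^sub>R y)) - H (p + \<sigma> *\<^sub>R (t *\<^sub>R y))" for \<sigma>::real
  define \<phi>' where "\<phi>' \<sigma> = (\<lambda>r::real. gH (p + t *\<^sub>R x + \<sigma> *\<^sub>R (t *\<^sub>R y)) \<bullet> (r *\<^sub>R (t *\<^sub>R y))
       - gH (p + \<sigma> *\<^sub>R (t *\<^sub>R y)) \<bullet> (r *\<^sub>R (t *\<^sub>R y)))" for \<sigma>
  have der: "(\<phi> has_derivative \<phi>' \<sigma>) (at \<sigma> within {0..1})" for \<sigma>
  proof -
    have a1: "((\<lambda>\<sigma>. p + t *\<^sub>R x + \<sigma> *\<^sub>R (t *\<^sub>R y)) has_derivative (\<lambda>r. r *\<^sub>R (t *\<^sub>R y))) (at \<sigma> within {0..1})"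
      by (auto intro!: derivative_eq_intros)
    have a2: "((\<lambda>\<sigma>. p + \<sigma> *\<^sub>R (t *\<^sub>R y)) has_derivative (\<lambda>r. r *\<^sub>R (t *\<^sub>R y))) (at \<sigma> within {0..1})"
      by (auto intro!: derivative_eq_intros)
    show ?thesis unfolding \<phi>_def[abs_def] \<phi>'_def
      by (rule has_derivative_diff[OF has_derivative_compose[OF a1 dH[rule_format]] has_derivative_compose[OF a2 dH[rule_format]]])
  qed
  obtain \<theta> where th: "\<theta> \<in> {0<..<1}" "\<phi> 1 - \<phi> 0 = \<phi>' \<theta> (1 - 0)"
    using mvt_simple[of 0 1 \<phi> \<phi>'] der by auto
  define w1 where "w1 = t *\<^sub>R x + \<theta> *\<^sub>R (t *\<^sub>R y)"
  define w2 where "w2 = \<theta> *\<^sub>R (t *\<^sub>R y)"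
  have n2: "norm w2 \<le> t * norm y"
    using th(1) t(1) by (simp add: w2_def mult_left_le_one_le)
  have n1: "norm w1 \<le> t * (norm x + norm y)"
  proof -
    have "norm w1 \<le> norm (t *\<^sub>R x) + norm w2" unfolding w1_def w2_def by (rule norm_triangle_ineq)
    then show ?thesis using n2 t(1) by (simp add: algebra_simps)
  qed
  have ny: "t * norm y \<le> t * (norm x + norm y)" using t(1) by simp
  have e1: "norm (gH (p+w1) - gH p - G w1) \<le> \<epsilon> * (t * (norm x + norm y))"
  proof -
    have "norm (gH (p+w1) - gH p - G w1) \<le> \<epsilon> * norm w1" using ap n1 t(2) by auto
    also have "\<dots> \<le> \<epsilon> * (t * (norm x + norm y))" using n1 ep by (simp add: mult_left_mono)
    finally show ?thesis .
  qed
  have e2: "norm (gH (p+w2) - gH p - G w2) \<le> \<epsilon> * (t * norm y)"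
  proof -
    have "norm (gH (p+w2) - gH p - G w2) \<le> \<epsilon> * norm w2" using ap n2 ny t(2) by auto
    also have "\<dots> \<le> \<epsilon> * (t * norm y)" using n2 ep by (simp add: mult_left_mono)
    finally show ?thesis .
  qed
  have Gw: "G w1 = t *\<^sub>R G x + G w2"
    using lin unfolding w1_def w2_def by (simp add: linear_add linear_scale)
  define R where "R = gH (p+w1) - gH (p+w2) - t *\<^sub>R G x"
  have Rdec: "R = (gH (p+w1) - gH p - G w1) - (gH (p+w2) - gH p - G w2)"
    unfolding R_def Gw by simp
  have nR: "norm R \<le> \<epsilon> * t * (norm x + 2 * norm y)"
  proof -
    have "norm R \<le> norm (gH (p+w1) - gH p - G w1) + norm (gH (p+w2) - gH p - G w2)"
      unfolding Rdec by (rule norm_triangle_ineq4)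
    also have "\<dots> \<le> \<epsilon> * (t * (norm x + norm y)) + \<epsilon> * (t * norm y)" using e1 e2 by linarith
    finally show ?thesis by (simp add: algebra_simps)
  qed
  have D: "H (p + t *\<^sub>R x + t *\<^sub>R y) - H (p + t *\<^sub>R x) - H (p + t *\<^sub>R y) + H p - t^2 * (G x \<bullet> y)
      = R \<bullet> (t *\<^sub>R y)"
  proof -
    have "H (p + t *\<^sub>R x + t *\<^sub>R y) - H (p + t *\<^sub>R x) - H (p + t *\<^sub>R y) + H p = \<phi> 1 - \<phi> 0"
      unfolding \<phi>_def by simp
    also have "\<dots> = (gH (p+w1) - gH (p+w2)) \<bullet> (t *\<^sub>R y)"
      unfolding th(2) \<phi>'_def w1_def w2_def by (simp add: add.assoc inner_diff_left algebra_simps)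
    finally show ?thesis unfolding R_def by (simp add: inner_diff_left power2_eq_square algebra_simps)
  qed
  have "\<bar>R \<bullet> (t *\<^sub>R y)\<bar> \<le> norm R * (t * norm y)"
    using Cauchy_Schwarz_ineq2[of R "t *\<^sub>R y"] t(1) by simp
  also have "\<dots> \<le> (\<epsilon> * t * (norm x + 2 * norm y)) * (t * norm y)"
    using nR t(1) by (simp add: mult_right_mono)
  finally show ?thesis unfolding D by (simp add: algebra_simps power2_eq_square)
qed

lemma hess_sym:
  fixes H :: "'a::real_inner \<Rightarrow> real"
  assumes dH: "\<forall>z. (H has_derivative (\<lambda>v. gH z \<bullet> v)) (at z)"
  and dG: "(gH has_derivative G) (at p)"
  shows "G x \<bullet> y = x \<bullet> G y"
proof -
  have bl: "bounded_linear G" and lim: "\<forall>e>0. \<exists>d>0. \<forall>z. norm (z - p) < d \<longrightarrow> norm (gH z - gH p - G (z - p)) \<le> e * norm (z - p)"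
    using dG unfolding has_derivative_at_alt by auto
  have lin: "linear G" using bl bounded_linear.linear by blast
  define K where "K = norm y * (norm x + 2 * norm y) + norm x * (norm y + 2 * norm x)"
  have K0: "K \<ge> 0" unfolding K_def by simp
  have bound: "\<bar>G x \<bullet> y - G y \<bullet> x\<bar> \<le> \<epsilon> * K" if ep: "\<epsilon> > 0" for \<epsilon>
  proof -
    obtain \<delta> where dp: "\<delta> > 0" and d: "\<forall>z. norm (z - p) < \<delta> \<longrightarrow> norm (gH z - gH p - G (z - p)) \<le> \<epsilon> * norm (z - p)"
      using lim ep by blast
    have ap: "\<forall>w. norm w < \<delta> \<longrightarrow> norm (gH (p+w) - gH p - G w) \<le> \<epsilon> * norm w"
      using d by (metis add_diff_cancel_left')
    define t where "t = \<delta> / (2 * (norm x + norm y + 1))"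
    have tp: "t > 0" unfolding t_def using dp by (simp add: add_nonneg_pos)
    have tl: "t * (norm x + norm y) < \<delta>"
    proof -
      have "t * (norm x + norm y) \<le> t * (norm x + norm y + 1)" using tp by simp
      also have "\<dots> = \<delta> / 2"
      proof -
        have "norm x + norm y + 1 > 0" by (simp add: add_nonneg_pos)
        then show ?thesis unfolding t_def by (simp add: field_simps)
      qed
      finally show ?thesis using dp by simp
    qed
    have tl2: "t * (norm y + norm x) < \<delta>" using tl by (simp add: add.commute)
    define Dl where "Dl = H (p + t *\<^sub>R x + t *\<^sub>R y) - H (p + t *\<^sub>R x) - H (p + t *\<^sub>R y) + H p"
    have eqp: "p + t *\<^sub>R y + t *\<^sub>R x = p + t *\<^sub>R x + t *\<^sub>R y" by (simp add: algebra_simps)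
    have Dl2: "H (p + t *\<^sub>R y + t *\<^sub>R x) - H (p + t *\<^sub>R y) - H (p + t *\<^sub>R x) + H p = Dl"
      unfolding Dl_def eqp by simp
    have i1: "\<bar>Dl - t^2 * (G x \<bullet> y)\<bar> \<le> \<epsilon> * t^2 * (norm y * (norm x + 2 * norm y))"
      unfolding Dl_def by (rule hess_est[OF dH lin ap ep tp tl])
    have i2: "\<bar>Dl - t^2 * (G y \<bullet> x)\<bar> \<le> \<epsilon> * t^2 * (norm x * (norm y + 2 * norm x))"
      unfolding Dl2[symmetric] by (rule hess_est[OF dH lin ap ep tp tl2])
    have "t^2 * \<bar>G x \<bullet> y - G y \<bullet> x\<bar> = \<bar>t^2 * (G x \<bullet> y) - t^2 * (G y \<bullet> x)\<bar>"
      by (simp add: abs_mult right_diff_distrib[symmetric])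
    also have "\<dots> \<le> \<bar>Dl - t^2 * (G x \<bullet> y)\<bar> + \<bar>Dl - t^2 * (G y \<bullet> x)\<bar>" by arith
    also have "\<dots> \<le> \<epsilon> * t^2 * (norm y * (norm x + 2 * norm y)) + \<epsilon> * t^2 * (norm x * (norm y + 2 * norm x))"
      using i1 i2 by linarith
    also have "\<dots> = t^2 * (\<epsilon> * K)" unfolding K_def by (simp add: algebra_simps)
    finally have "t^2 * \<bar>G x \<bullet> y - G y \<bullet> x\<bar> \<le> t^2 * (\<epsilon> * K)" .
    then show ?thesis using tp by simp
  qed
  have "\<bar>G x \<bullet> y - G y \<bullet> x\<bar> = 0"
  proof (rule ccontr)
    assume ne: "\<bar>G x \<bullet> y - G y \<bullet> x\<bar> \<noteq> 0"
    define A where "A = \<bar>G x \<bullet> y - G y \<bullet> x\<bar>"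
    have Ap: "A > 0" using ne unfolding A_def by simp
    have "A / (K + 1) > 0" using Ap K0 by (simp add: add_nonneg_pos)
    from bound[OF this] have "A \<le> (A / (K + 1)) * K" unfolding A_def by simp
    also have "\<dots> < A" using Ap K0 by (simp add: field_simps)
    finally show False by simp
  qed
  then show ?thesis by (simp add: inner_commute)
qed


definition sw :: "'a + 'a \<Rightarrow> 'a + 'a" where
  "sw k = (case k of Inl i \<Rightarrow> Inr i | Inr i \<Rightarrow> Inl i)"

lemma sw_sw[simp]: "sw (sw k) = k" by (cases k) (auto simp: sw_def)

lemma sum_sw: "(\<Sum>k\<in>UNIV. g (sw k)) = (\<Sum>k\<in>UNIV. g k)"
  by (rule sum.reindex_bij_witness[of _ sw sw]) auto

lemma canonJ_comp: "canon_J a $ k = (case k of Inl i \<Rightarrow> a $ Inr i | Inr i \<Rightarrow> - (a $ Inl i))"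
  unfolding canon_J_def by simp

lemma canonJ_inner: "canon_J a \<bullet> canon_J b = a \<bullet> b"
proof -
  have "canon_J a $ k * canon_J b $ k = a $ sw k * b $ sw k" for k
    by (cases k) (auto simp: canonJ_comp sw_def)
  then have "canon_J a \<bullet> canon_J b = (\<Sum>k\<in>UNIV. a $ sw k * b $ sw k)"
    unfolding inner_vec_def by simp
  also have "\<dots> = a \<bullet> b" unfolding inner_vec_def using sum_sw[of "\<lambda>k. a $ k * b $ k"] by simp
  finally show ?thesis .
qed

lemma canonJJ: "canon_J (canon_J a) = - a"
  by (simp add: vec_eq_iff canonJ_comp split: sum.split)

lemma canonJ_linear: "linear canon_J"
  unfolding linear_iff by (auto simp: vec_eq_iff canonJ_comp split: sum.split)

lemma canonJ_bl: "bounded_linear (canon_J :: real^('n::finite + 'n) \<Rightarrow> _)"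
  using canonJ_linear linear_conv_bounded_linear by blast

lemma symp_bil: "bilinear (symp_form :: real^('n::finite + 'n) \<Rightarrow> _)"
  unfolding bilinear_def symp_form_def[abs_def] linear_iff
  by (simp add: linear_add[OF canonJ_linear] linear_scale[OF canonJ_linear] inner_add_left inner_add_right)

lemma ham_cond:
  assumes "\<forall>x y. G x \<bullet> y = x \<bullet> G y"
  shows "symp_form (canon_J (G X)) Y + symp_form X (canon_J (G Y)) = 0"
  unfolding symp_form_def canonJ_inner canonJJ using assms by simp

lemma symp_part:
  assumes sm: "s \<le> m" and nb: "nullspace_basis (m - s) m s d V"
    and b0: "\<forall>i. s \<le> i \<and> i < m \<longrightarrow> b i = 0"
    and MV: "\<forall>p<s. \<forall>q<s. (\<Sum>i<m. \<Sum>j<m. V i p * M_mat s a b i j * V j q) = 0"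
  shows "symplectic_method TYPE('k::finite) m s a b d"
  unfolding symplectic_method_def
proof (intro allI impI)
  fix H :: "real^('k+'k) \<Rightarrow> real" and f h U and K :: "nat \<Rightarrow> real^('k+'k) \<Rightarrow> real^('k+'k)"
  assume hf: "hamiltonian_field H f" and oU: "open U" and Kd: "\<forall>i<m. \<forall>z\<in>U. K i differentiable (at z)"
    and st: "\<forall>z\<in>U. erk_step m s a b d f h z (\<lambda>i. K i z) (z + h *\<^sub>R (\<Sum>i<m. b i *\<^sub>R K i z))"
  from hf obtain gH where dH: "\<forall>z. (H has_derivative (\<lambda>v. gH z \<bullet> v)) (at z)"
    and dg: "\<forall>z. gH differentiable (at z)"
    and fdef: "\<forall>z. f z = (\<chi> k. case k of Inl i \<Rightarrow> gH z $ Inr i | Inr i \<Rightarrow> - (gH z $ Inl i))"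
    unfolding hamiltonian_field_def by blast
  have fJ: "f w = canon_J (gH w)" for w using fdef unfolding canon_J_def by simp
  show "symplectic_on U (\<lambda>z. z + h *\<^sub>R (\<Sum>i<m. b i *\<^sub>R K i z))"
    unfolding symplectic_on_def
  proof
    fix z assume zU: "z \<in> U"
    define D where "D i = frechet_derivative (K i) (at z)" for i
    have KD: "(K i has_derivative D i) (at z)" if "i<m" for i
      using Kd zU that unfolding D_def frechet_derivative_works by blast
    define P where "P w = w + h *\<^sub>R (\<Sum>i<m. b i *\<^sub>R D i w)" for w
    have dPhi: "((\<lambda>z. z + h *\<^sub>R (\<Sum>i<m. b i *\<^sub>R K i z)) has_derivative P) (at z)"
      unfolding P_def[abs_def] by (auto intro!: derivative_eq_intros KD)
    have dD: "\<forall>r<m-s. (\<Sum>j<m. d r j *\<^sub>R D j w) = 0" for w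
    proof (intro allI impI)
      fix r assume r: "r < m - s"
      have h1: "((\<lambda>z. \<Sum>j<m. d r j *\<^sub>R K j z) has_derivative (\<lambda>w. \<Sum>j<m. d r j *\<^sub>R D j w)) (at z)"
        by (auto intro!: derivative_eq_intros KD)
      have "((\<lambda>z. 0) has_derivative (\<lambda>w. \<Sum>j<m. d r j *\<^sub>R D j w)) (at z)"
        by (rule has_derivative_transform_within_open[OF h1 oU zU]) (use st r in \<open>auto simp: erk_step_def\<close>)
      then have "(\<lambda>w. \<Sum>j<m. d r j *\<^sub>R D j w) = (\<lambda>w. 0)"
        using has_derivative_unique has_derivative_const by blast
      then show "(\<Sum>j<m. d r j *\<^sub>R D j w) = 0" by metis
    qed
    define Zd where "Zd i w = w + h *\<^sub>R (\<Sum>j<m. a i j *\<^sub>R D j w)" for i w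
    define Zp where "Zp i = z + h *\<^sub>R (\<Sum>j<m. a i j *\<^sub>R K j z)" for i
    define G where "G i = frechet_derivative gH (at (Zp i))" for i
    have GD: "(gH has_derivative G i) (at (Zp i))" for i
      using dg unfolding G_def frechet_derivative_works by blast
    have Gsym: "\<forall>x y. G i x \<bullet> y = x \<bullet> G i y" for i
      using hess_sym[OF dH GD] by blast
    have DS: "D i w = canon_J (G i (Zd i w))" if i: "i < s" for i w
    proof -
      have h1: "((\<lambda>z. z + h *\<^sub>R (\<Sum>j<m. a i j *\<^sub>R K j z)) has_derivative Zd i) (at z)"
        unfolding Zd_def[abs_def] by (auto intro!: derivative_eq_intros KD)
      have h2: "((\<lambda>z. gH (z + h *\<^sub>R (\<Sum>j<m. a i j *\<^sub>R K j z))) has_derivative (\<lambda>w. G i (Zd i w))) (at z)"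
        by (rule has_derivative_compose[OF h1]) (use GD Zp_def in simp)
      have h3: "((\<lambda>z. canon_J (gH (z + h *\<^sub>R (\<Sum>j<m. a i j *\<^sub>R K j z)))) has_derivative (\<lambda>w. canon_J (G i (Zd i w)))) (at z)"
        by (rule bounded_linear.has_derivative[OF canonJ_bl h2])
      have "(K i has_derivative (\<lambda>w. canon_J (G i (Zd i w)))) (at z)"
        by (rule has_derivative_transform_within_open[OF h3 oU zU]) (use st i in \<open>auto simp: erk_step_def fJ\<close>)
      moreover have "(K i has_derivative D i) (at z)" using KD i sm by simp
      ultimately have "D i = (\<lambda>w. canon_J (G i (Zd i w)))" using has_derivative_unique by metis
      then show ?thesis by simp
    qed
    show "\<exists>\<Phi>'. ((\<lambda>z. z + h *\<^sub>R (\<Sum>i<m. b i *\<^sub>R K i z)) has_derivative \<Phi>') (at z) \<and>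
               (\<forall>u v. symp_form (\<Phi>' u) (\<Phi>' v) = symp_form u v)"
    proof (intro exI[of _ P] conjI dPhi allI)
      fix u v
      obtain \<kappa> where kV: "\<forall>j<m. D j u = (\<Sum>l<s. V j l *\<^sub>R \<kappa> l)"
        using V_decomp[OF nb dD[of u]] by blast
      obtain \<mu> where lV: "\<forall>j<m. D j v = (\<Sum>l<s. V j l *\<^sub>R \<mu> l)"
        using V_decomp[OF nb dD[of v]] by blast
      show "symp_form (P u) (P v) = symp_form u v"
        unfolding P_def
      proof (rule core[OF symp_bil b0 MV kV lV])
        show "\<forall>i<s. symp_form (D i u) (v + h *\<^sub>R (\<Sum>j<m. a i j *\<^sub>R D j v)) +
                    symp_form (u + h *\<^sub>R (\<Sum>j<m. a i j *\<^sub>R D j u)) (D i v) = 0"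
          using DS ham_cond[OF Gsym] unfolding Zd_def by simp
      qed
    qed
  qed
qed

theorem proposition3:
  fixes m s :: nat and a d V :: "nat \<Rightarrow> nat \<Rightarrow> real" and b :: "nat \<Rightarrow> real"
  assumes "s \<le> m"
    and "full_row_rank (m - s) m d"
    and "nullspace_basis (m - s) m s d V"
    and "\<forall>i. s \<le> i \<and> i < m \<longrightarrow> b i = 0"
    and "\<forall>p<s. \<forall>q<s. (\<Sum>i<m. \<Sum>j<m. V i p * M_mat s a b i j * V j q) = 0"
  shows "quadratic_preserving TYPE('n::finite) m s a b d \<and> symplectic_method TYPE('k::finite) m s a b d"
  using quad_part[OF assms(3,4,5)] symp_part[OF assms(1,3,4,5)] by blast

end
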